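(* For any direct signaling scheme $\pi$, the expected regret incurred by the procedure CheckPersu$(\pi)$ is at most $$\frac{U(\pi^* )}{\sum_{i\in[m]}\lambda(i)\pi(i)}-\mathbf{1}[\pi\text{ is persuasive}].$$
   Context: Model: state space $[m]$, common prior $\lambda\in\Delta([m])$, user actions $\{0,1\}$, user utility $\rho$; $\omega(i)=(\rho(i,1)-\rho(i,0))\lambda(i)$, with standing assumptions that some $\omega(i)>0$ and $\sum_i\omega(i)<0$. In each round the platform commits to a signaling scheme, a state $\theta_t\sim\lambda$ (independent across rounds) and a signal are drawn, the user forms the Bayesian posterior and takes action 1 iff its posterior expected utility is at least that of action 0, and the platform gets utility equal to the action. $U(\pi)$ is the platform's expected one-round utility under $\pi$. A direct signaling scheme has signals $\{0,1\}$, sending signal 1 in state $i$ w.p. $\pi(i)$; it is persuasive if the user takes action 1 whenever signal 1 is realized. $\pi^*$ is an optimal solution of $\max_{\pi\in[0,1]^m}\sum_i\lambda(i)\pi(i)$ s.t. $\sum_i\omega(i)\pi(i)\ge0$ (the optimal scheme in hindsight). Procedure CheckPersu$(\pi)$: in each successive round commit to $\pi$; if $\sigma_t=1,a_t=1$ return True; if $\sigma_t=1,a_t=0$ return False; if $\sigma_t=0,a_t=1$ return False; else continue to the next round. The regret incurred by the procedure is the expected sum, over the rounds it uses, of $U(\pi^* )-U(\pi)$. *)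

theory Defs
  imports "HOL-Probability.Probability"
begin

(* States are 0..<m; the prior lambda is a pmf supported on {..<m}.
   User utility rho i a for state i and action a in {0,1}.
   A direct signaling scheme is sch :: nat => real, sch i = P(signal 1 | state i).
   Signals are booleans (True = signal 1); user actions are booleans (True = action 1). *)

definition omega :: "nat pmf \<Rightarrow> (nat \<Rightarrow> nat \<Rightarrow> real) \<Rightarrow> nat \<Rightarrow> real" where
  "omega lam rho i = (rho i 1 - rho i 0) * pmf lam i"

definition lik :: "(nat \<Rightarrow> real) \<Rightarrow> bool \<Rightarrow> nat \<Rightarrow> real" where
  "lik sch s i = (if s then sch i else 1 - sch i)"

definition sig_prob :: "nat \<Rightarrow> nat pmf \<Rightarrow> (nat \<Rightarrow> real) \<Rightarrow> bool \<Rightarrow> real" where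
  "sig_prob m lam sch s = (\<Sum>i<m. pmf lam i * lik sch s i)"

definition posterior :: "nat \<Rightarrow> nat pmf \<Rightarrow> (nat \<Rightarrow> real) \<Rightarrow> bool \<Rightarrow> nat \<Rightarrow> real" where
  "posterior m lam sch s i = pmf lam i * lik sch s i / sig_prob m lam sch s"

definition user_act :: "nat \<Rightarrow> nat pmf \<Rightarrow> (nat \<Rightarrow> nat \<Rightarrow> real) \<Rightarrow> (nat \<Rightarrow> real) \<Rightarrow> bool \<Rightarrow> bool" where
  "user_act m lam rho sch s \<longleftrightarrow>
     (\<Sum>i<m. posterior m lam sch s i * rho i 1) \<ge> (\<Sum>i<m. posterior m lam sch s i * rho i 0)"

(* platform's expected one-round utility (= probability of action 1) *)
definition U :: "nat \<Rightarrow> nat pmf \<Rightarrow> (nat \<Rightarrow> nat \<Rightarrow> real) \<Rightarrow> (nat \<Rightarrow> real) \<Rightarrow> real" where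
  "U m lam rho sch = (\<Sum>i<m. pmf lam i * (\<Sum>s\<in>(UNIV::bool set).
       lik sch s i * (if user_act m lam rho sch s then 1 else 0)))"

definition persuasive :: "nat \<Rightarrow> nat pmf \<Rightarrow> (nat \<Rightarrow> nat \<Rightarrow> real) \<Rightarrow> (nat \<Rightarrow> real) \<Rightarrow> bool" where
  "persuasive m lam rho sch \<longleftrightarrow> (sig_prob m lam sch True > 0 \<longrightarrow> user_act m lam rho sch True)"

(* sstar is an optimal solution of the LP defining the optimal scheme in hindsight *)
definition lp_feasible :: "nat \<Rightarrow> nat pmf \<Rightarrow> (nat \<Rightarrow> nat \<Rightarrow> real) \<Rightarrow> (nat \<Rightarrow> real) \<Rightarrow> bool" where
  "lp_feasible m lam rho p \<longleftrightarrow> (\<forall>i<m. 0 \<le> p i \<and> p i \<le> 1) \<and> (\<Sum>i<m. omega lam rho i * p i) \<ge> 0"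

definition lp_optimal :: "nat \<Rightarrow> nat pmf \<Rightarrow> (nat \<Rightarrow> nat \<Rightarrow> real) \<Rightarrow> (nat \<Rightarrow> real) \<Rightarrow> bool" where
  "lp_optimal m lam rho p \<longleftrightarrow> lp_feasible m lam rho p \<and>
     (\<forall>q. lp_feasible m lam rho q \<longrightarrow> (\<Sum>i<m. pmf lam i * q i) \<le> (\<Sum>i<m. pmf lam i * p i))"

definition round_pmf :: "nat pmf \<Rightarrow> (nat \<Rightarrow> real) \<Rightarrow> (nat \<times> bool) pmf" where
  "round_pmf lam sch = bind_pmf lam (\<lambda>\<theta>. map_pmf (\<lambda>b. (\<theta>, b)) (bernoulli_pmf (sch \<theta>)))"

definition stops :: "nat \<Rightarrow> nat pmf \<Rightarrow> (nat \<Rightarrow> nat \<Rightarrow> real) \<Rightarrow> (nat \<Rightarrow> real) \<Rightarrow> nat \<times> bool \<Rightarrow> bool" where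
  "stops m lam rho sch x \<longleftrightarrow> snd x \<or> user_act m lam rho sch (snd x)"

(* expected regret of CheckPersu(sch): rounds are i.i.d.; round t is used iff no earlier round stopped;
   each used round contributes U(sstar) - U(sch) *)
definition checkpersu_regret ::
  "nat \<Rightarrow> nat pmf \<Rightarrow> (nat \<Rightarrow> nat \<Rightarrow> real) \<Rightarrow> (nat \<Rightarrow> real) \<Rightarrow> (nat \<Rightarrow> real) \<Rightarrow> ennreal" where
  "checkpersu_regret m lam rho sstar sch =
     (\<integral>\<^sup>+ xs. (\<Sum>t. if (\<forall>t'<t. \<not> stops m lam rho sch (xs !! t'))
                      then ennreal (U m lam rho sstar - U m lam rho sch) else 0)
        \<partial>stream_space (measure_pmf (round_pmf lam sch)))"

end

theory Submission imports Defs begin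

declare [[simproc del: measurable]]

lemma all_less_Suc': "(\<forall>t'<Suc t. Q t') \<longleftrightarrow> Q 0 \<and> (\<forall>t'<t. Q (Suc t'))"
  by (auto simp: less_Suc_eq_0_disj)

lemma meas_stream_pred:
  fixes M :: "'a pmf" and P :: "'a \<Rightarrow> bool" and c :: ennreal
  shows "(\<lambda>xs. if \<forall>t'<t. P (xs !! t') then c else 0) \<in> borel_measurable (stream_space (measure_pmf M))"
proof -
  let ?S = "stream_space (measure_pmf M)"
  have pr: "{xs \<in> space ?S. P (xs !! i)} \<in> sets ?S" for i
  proof -
    have "{xs \<in> space ?S. P (xs !! i)} = (\<lambda>xs. xs !! i) -` {x. P x} \<inter> space ?S" by auto
    also have "\<dots> \<in> sets ?S"
      by (rule measurable_sets[OF measurable_snth]) simp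
    finally show ?thesis .
  qed
  have "{xs \<in> space ?S. \<forall>i\<in>{..<t}. P (xs !! i)} \<in> sets ?S"
    by (rule sets.sets_Collect_finite_All[OF pr]) simp
  moreover have "{xs. \<forall>t'<t. P (xs !! t')} \<inter> space ?S = {xs \<in> space ?S. \<forall>i\<in>{..<t}. P (xs !! i)}"
    by auto
  ultimately have A: "{xs. \<forall>t'<t. P (xs !! t')} \<inter> space ?S \<in> sets ?S" by simp
  have "(\<lambda>xs. if xs \<in> {xs. \<forall>t'<t. P (xs !! t')} then c else 0) \<in> borel_measurable ?S"
    by (rule measurable_If_set[OF measurable_const measurable_const A]) simp_all
  then show ?thesis by simp
qed

lemma stream_geom:
  fixes M :: "'a pmf" and P :: "'a \<Rightarrow> bool"
  shows "(\<integral>\<^sup>+xs. (if \<forall>t'<t. P (xs !! t') then 1 else 0) \<partial>stream_space (measure_pmf M))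
         = emeasure (measure_pmf M) {x. P x} ^ t"
proof (induction t)
  case 0
  then show ?case using prob_space.emeasure_space_1[OF prob_space.prob_space_stream_space[OF prob_space_measure_pmf]] by simp
next
  case (Suc t)
  have meas: "(\<lambda>xs. if \<forall>t'<Suc t. P (xs !! t') then 1 else (0::ennreal)) \<in> borel_measurable (stream_space (measure_pmf M))"
    by (rule meas_stream_pred)
  have "(\<integral>\<^sup>+xs. (if \<forall>t'<Suc t. P (xs !! t') then 1 else 0) \<partial>stream_space (measure_pmf M))
      = (\<integral>\<^sup>+x. (\<integral>\<^sup>+X. (if \<forall>t'<Suc t. P ((x ## X) !! t') then 1 else 0) \<partial>stream_space (measure_pmf M)) \<partial>measure_pmf M)"
    by (rule prob_space.nn_integral_stream_space[OF prob_space_measure_pmf meas])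
  also have "\<dots> = (\<integral>\<^sup>+x. indicator {x. P x} x * (\<integral>\<^sup>+X. (if \<forall>t'<t. P (X !! t') then 1 else 0) \<partial>stream_space (measure_pmf M)) \<partial>measure_pmf M)"
  proof (rule nn_integral_cong)
    fix x
    have "\<And>X. (if \<forall>t'<Suc t. P ((x ## X) !! t') then 1 else (0::ennreal)) = indicator {x. P x} x * (if \<forall>t'<t. P (X !! t') then 1 else 0)"
      by (simp only: all_less_Suc') (auto simp: indicator_def)
    then show "(\<integral>\<^sup>+X. (if \<forall>t'<Suc t. P ((x ## X) !! t') then 1 else 0) \<partial>stream_space (measure_pmf M)) = indicator {x. P x} x * (\<integral>\<^sup>+X. (if \<forall>t'<t. P (X !! t') then 1 else 0) \<partial>stream_space (measure_pmf M))"
      by (simp add: nn_integral_cmult[OF meas_stream_pred])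
  qed
  also have "\<dots> = emeasure (measure_pmf M) {x. P x} ^ Suc t"
    by (simp add: Suc nn_integral_multc mult.commute)
  finally show ?case .
qed

lemma regret_formula:
  "checkpersu_regret m lam rho sstar sch =
     ennreal (U m lam rho sstar - U m lam rho sch) *
     (\<Sum>t. emeasure (measure_pmf (round_pmf lam sch)) {x. \<not> stops m lam rho sch x} ^ t)"
proof -
  let ?M = "measure_pmf (round_pmf lam sch)"
  let ?c = "ennreal (U m lam rho sstar - U m lam rho sch)"
  let ?P = "\<lambda>x. \<not> stops m lam rho sch x"
  have "checkpersu_regret m lam rho sstar sch = (\<integral>\<^sup>+xs. (\<Sum>t. if \<forall>t'<t. ?P (xs !! t') then ?c else 0) \<partial>stream_space ?M)"
    unfolding checkpersu_regret_def ..
  also have "\<dots> = (\<Sum>t. \<integral>\<^sup>+xs. (if \<forall>t'<t. ?P (xs !! t') then ?c else 0) \<partial>stream_space ?M)"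
    by (rule nn_integral_suminf) (rule meas_stream_pred)
  also have "\<dots> = (\<Sum>t. ?c * emeasure ?M {x. ?P x} ^ t)"
  proof (rule suminf_cong)
    fix t
    have "(\<integral>\<^sup>+xs. (if \<forall>t'<t. ?P (xs !! t') then ?c else 0) \<partial>stream_space ?M)
        = (\<integral>\<^sup>+xs. ?c * (if \<forall>t'<t. ?P (xs !! t') then 1 else 0) \<partial>stream_space ?M)"
      by (rule nn_integral_cong) auto
    also have "\<dots> = ?c * (\<integral>\<^sup>+xs. (if \<forall>t'<t. ?P (xs !! t') then 1 else 0) \<partial>stream_space ?M)"
      by (rule nn_integral_cmult) (rule meas_stream_pred)
    also have "\<dots> = ?c * emeasure ?M {x. ?P x} ^ t"
      using stream_geom[where P="?P" and M="round_pmf lam sch" and t=t] by simp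
    finally show "(\<integral>\<^sup>+xs. (if \<forall>t'<t. ?P (xs !! t') then ?c else 0) \<partial>stream_space ?M) = ?c * emeasure ?M {x. ?P x} ^ t" .
  qed
  finally show ?thesis by simp
qed

lemma user_act_iff:
  "user_act m lam rho sch s \<longleftrightarrow> (\<Sum>i<m. omega lam rho i * lik sch s i) / sig_prob m lam sch s \<ge> 0"
proof -
  have "(\<Sum>i<m. posterior m lam sch s i * rho i 1) - (\<Sum>i<m. posterior m lam sch s i * rho i 0)
        = (\<Sum>i<m. omega lam rho i * lik sch s i) / sig_prob m lam sch s"
    unfolding posterior_def omega_def
    by (simp add: sum_subtractf[symmetric] sum_divide_distrib diff_divide_distrib algebra_simps)
  then show ?thesis unfolding user_act_def by linarith
qed

lemma U_eq:
  "U m lam rho sch = sig_prob m lam sch True * (if user_act m lam rho sch True then 1 else 0)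
     + sig_prob m lam sch False * (if user_act m lam rho sch False then 1 else 0)"
  unfolding U_def sig_prob_def UNIV_bool
  by (simp add: sum.distrib sum_distrib_right algebra_simps)

lemma emeasure_notsnd:
  assumes supp: "set_pmf lam \<subseteq> {..<m}" and pi_range: "\<forall>i<m. 0 \<le> sch i \<and> sch i \<le> 1"
  shows "emeasure (measure_pmf (round_pmf lam sch)) {x. \<not> snd x} = ennreal (\<Sum>i<m. pmf lam i * (1 - sch i))"
proof -
  have "emeasure (measure_pmf (round_pmf lam sch)) {x. \<not> snd x}
      = (\<integral>\<^sup>+x. indicator {x. \<not> snd x} x \<partial>measure_pmf (round_pmf lam sch))"
    by simp
  also have "\<dots> = (\<integral>\<^sup>+\<theta>. (\<integral>\<^sup>+b. indicator {x. \<not> snd x} (\<theta>, b) \<partial>measure_pmf (bernoulli_pmf (sch \<theta>))) \<partial>measure_pmf lam)"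
    unfolding round_pmf_def by simp
  also have "\<dots> = (\<Sum>\<theta>\<in>{..<m}. (\<integral>\<^sup>+b. indicator {x. \<not> snd x} (\<theta>, b) \<partial>measure_pmf (bernoulli_pmf (sch \<theta>))) * pmf lam \<theta>)"
    by (rule nn_integral_measure_pmf_support) (use supp in auto)
  also have "\<dots> = (\<Sum>\<theta>\<in>{..<m}. ennreal (pmf lam \<theta> * (1 - sch \<theta>)))"
  proof (rule sum.cong)
    fix \<theta> assume "\<theta> \<in> {..<m}"
    then have r: "0 \<le> sch \<theta>" "sch \<theta> \<le> 1" using pi_range by auto
    have "(\<integral>\<^sup>+b. indicator {x. \<not> snd x} (\<theta>, b) \<partial>measure_pmf (bernoulli_pmf (sch \<theta>))) = ennreal (1 - sch \<theta>)"
      using r by (simp add: indicator_def)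
    then show "(\<integral>\<^sup>+b. indicator {x. \<not> snd x} (\<theta>, b) \<partial>measure_pmf (bernoulli_pmf (sch \<theta>))) * pmf lam \<theta> = ennreal (pmf lam \<theta> * (1 - sch \<theta>))"
      using r by (simp add: ennreal_mult'' mult.commute)
  qed simp
  also have "\<dots> = ennreal (\<Sum>i<m. pmf lam i * (1 - sch i))"
    using pi_range by (intro sum_ennreal) auto
  finally show ?thesis .
qed

lemma geom_ennreal:
  assumes "0 \<le> x" "x < 1"
  shows "(\<Sum>t. ennreal x ^ t) = ennreal (1 / (1 - x))"
proof -
  have "(\<Sum>t. ennreal x ^ t) = (\<Sum>t. ennreal (x ^ t))"
    using assms by (simp add: ennreal_power)
  also have "\<dots> = ennreal (1 / (1 - x))"
    by (rule suminf_ennreal_eq) (use assms in \<open>auto intro: geometric_sums\<close>)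
  finally show ?thesis .
qed

theorem mainTheorem5:
  fixes m :: nat and lam :: "nat pmf" and rho :: "nat \<Rightarrow> nat \<Rightarrow> real"
    and sstar sch :: "nat \<Rightarrow> real"
  assumes supp: "set_pmf lam \<subseteq> {..<m}"
    and pos: "\<exists>i<m. omega lam rho i > 0"
    and neg: "(\<Sum>i<m. omega lam rho i) < 0"
    and opt: "lp_optimal m lam rho sstar"
    and pi_range: "\<forall>i<m. 0 \<le> sch i \<and> sch i \<le> 1"
  shows "checkpersu_regret m lam rho sstar sch \<le>
           ennreal (U m lam rho sstar) / ennreal (\<Sum>i<m. pmf lam i * sch i)
           - (if persuasive m lam rho sch then 1 else 0)"
proof -
  define S where "S = (\<Sum>i<m. pmf lam i * sch i)"
  define Ss where "Ss = (\<Sum>i<m. pmf lam i * sstar i)"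
  define a1 where "a1 = user_act m lam rho sch True"
  define a0 where "a0 = user_act m lam rho sch False"
  have lam1: "(\<Sum>i<m. pmf lam i) = 1"
    using sum_pmf_eq_1[OF _ supp] by simp
  have S0: "0 \<le> S" unfolding S_def using pi_range by (intro sum_nonneg) auto
  have S1: "S \<le> 1"
  proof -
    have "S \<le> (\<Sum>i<m. pmf lam i)" unfolding S_def
      using pi_range by (intro sum_mono) (auto intro: mult_left_le)
    then show ?thesis using lam1 by simp
  qed
  have spT: "sig_prob m lam sch True = S" unfolding sig_prob_def lik_def S_def by simp
  have spF_gen: "\<And>p. sig_prob m lam p False = 1 - (\<Sum>i<m. pmf lam i * p i)"
    unfolding sig_prob_def lik_def using lam1
    by (simp add: right_diff_distrib sum_subtractf)
  have Usch: "U m lam rho sch = S * (if a1 then 1 else 0) + (1 - S) * (if a0 then 1 else 0)"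
    using U_eq[of m lam rho sch] spT spF_gen[of sch] unfolding a1_def a0_def S_def by simp
  have feas: "lp_feasible m lam rho sstar" and best: "\<And>q. lp_feasible m lam rho q \<Longrightarrow> (\<Sum>i<m. pmf lam i * q i) \<le> Ss"
    using opt unfolding lp_optimal_def Ss_def by auto
  have ss_range: "\<forall>i<m. 0 \<le> sstar i \<and> sstar i \<le> 1" and ss_om: "(\<Sum>i<m. omega lam rho i * sstar i) \<ge> 0"
    using feas unfolding lp_feasible_def by auto
  have Ss1: "Ss \<le> 1"
  proof -
    have "Ss \<le> (\<Sum>i<m. pmf lam i)" unfolding Ss_def
      using ss_range by (intro sum_mono) (auto intro: mult_left_le)
    then show ?thesis using lam1 by simp
  qed
  have Ss0: "Ss > 0"
  proof -
    obtain j where j: "j < m" "omega lam rho j > 0" using pos by auto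
    have pj: "pmf lam j > 0"
    proof -
      have "pmf lam j \<noteq> 0" using j(2) unfolding omega_def by auto
      then show ?thesis using pmf_nonneg[of lam j] by linarith
    qed
    define q where "q = (\<lambda>i. if i = j then 1 else (0::real))"
    have sq: "\<And>f. (\<Sum>i<m. f i * q i) = f j"
      unfolding q_def using j(1) by (simp add: if_distrib sum.delta cong: if_cong)
    have "lp_feasible m lam rho q"
      unfolding lp_feasible_def using sq[of "omega lam rho"] j by (auto simp: q_def)
    then have "(\<Sum>i<m. pmf lam i * q i) \<le> Ss" by (rule best)
    then show ?thesis using sq[of "pmf lam"] pj by simp
  qed
  have Uss: "U m lam rho sstar = Ss"
  proof -
    have spTs: "sig_prob m lam sstar True = Ss" unfolding sig_prob_def lik_def Ss_def by simp
    have aT: "user_act m lam rho sstar True"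
      unfolding user_act_iff spTs using ss_om Ss0 by (simp add: lik_def)
    have aF: "\<not> user_act m lam rho sstar False" if "Ss < 1"
    proof -
      have "(\<Sum>i<m. omega lam rho i * lik sstar False i) = (\<Sum>i<m. omega lam rho i) - (\<Sum>i<m. omega lam rho i * sstar i)"
        by (simp add: lik_def right_diff_distrib sum_subtractf)
      also have "\<dots> < 0" using neg ss_om by linarith
      finally have "(\<Sum>i<m. omega lam rho i * lik sstar False i) < 0" .
      moreover have "sig_prob m lam sstar False > 0" using spF_gen[of sstar] that Ss_def by simp
      ultimately show ?thesis unfolding user_act_iff by (simp add: divide_less_0_iff not_le)
    qed
    show ?thesis
      using U_eq[of m lam rho sstar] spTs spF_gen[of sstar] aT aF Ss1 unfolding Ss_def[symmetric]
      by (cases "Ss < 1") auto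
  qed
  have reg: "checkpersu_regret m lam rho sstar sch =
     ennreal (Ss - U m lam rho sch) * (\<Sum>t. emeasure (measure_pmf (round_pmf lam sch)) {x. \<not> stops m lam rho sch x} ^ t)"
    using regret_formula Uss by simp
  show ?thesis
  proof (cases "S = 0")
    case True
    then show ?thesis unfolding S_def[symmetric] Uss using Ss0 by simp
  next
    case False
    then have Sp: "S > 0" using S0 by simp
    have pers: "persuasive m lam rho sch \<longleftrightarrow> a1"
      unfolding persuasive_def a1_def spT using Sp by simp
    have rhs: "ennreal (U m lam rho sstar) / ennreal (\<Sum>i<m. pmf lam i * sch i) = ennreal (Ss / S)"
      unfolding S_def[symmetric] Uss using Sp Ss0 by (simp add: divide_ennreal)
    have SsS: "Ss \<le> Ss / S" using Sp S1 Ss0 by (simp add: le_divide_eq mult_left_le)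
    show ?thesis
    proof (cases a0)
      case True
      have "\<And>b. b \<or> user_act m lam rho sch b"
        using True unfolding a0_def by (metis (full_types))
      then have emp: "{x. \<not> stops m lam rho sch x} = {}"
        unfolding stops_def by auto
      have g: "(\<Sum>t. emeasure (measure_pmf (round_pmf lam sch)) {x. \<not> stops m lam rho sch x} ^ t) = 1"
        unfolding emp using geom_ennreal[of 0] by simp
      show ?thesis
      proof (cases a1)
        case True
        have "Ss - U m lam rho sch \<le> 0" using Usch \<open>a0\<close> True Ss1 by simp
        then have "ennreal (Ss - U m lam rho sch) = 0" by (simp add: ennreal_eq_0_iff)
        then show ?thesis unfolding reg g by simp
      next
        case False
        have "Ss - U m lam rho sch \<le> Ss / S" using Usch \<open>a0\<close> False SsS Sp S1 by simp
        then show ?thesis unfolding reg g rhs pers using False by (simp add: ennreal_leI)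
      qed
    next
      case False
      have "{x. \<not> stops m lam rho sch x} = {x. \<not> snd x}"
        using False unfolding stops_def a0_def by auto
      moreover have "emeasure (measure_pmf (round_pmf lam sch)) {x. \<not> snd x} = ennreal (1 - S)"
        using emeasure_notsnd[OF supp pi_range] spF_gen[of sch] unfolding sig_prob_def lik_def S_def
        by simp
      ultimately have g: "(\<Sum>t. emeasure (measure_pmf (round_pmf lam sch)) {x. \<not> stops m lam rho sch x} ^ t) = ennreal (1 / S)"
        using geom_ennreal[of "1 - S"] S1 Sp by simp
      have lhs: "checkpersu_regret m lam rho sstar sch = ennreal ((Ss - U m lam rho sch) * (1 / S))"
        unfolding reg g using Sp ennreal_mult''[of "1 / S" "Ss - U m lam rho sch"] by simp
      show ?thesis
      proof (cases a1)
        case True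
        have "(Ss - U m lam rho sch) * (1 / S) = Ss / S - 1" using Usch \<open>\<not> a0\<close> True Sp
          by (simp add: field_simps)
        then show ?thesis unfolding lhs rhs pers using True Sp Ss0 ennreal_minus[of 1 "Ss / S"] by simp
      next
        case False
        have eqq: "(Ss - U m lam rho sch) * (1 / S) = Ss / S" using Usch \<open>\<not> a0\<close> False by simp
        show ?thesis unfolding lhs rhs pers eqq using False by simp
      qed
    qed
  qed
qed

end
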